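(* Let $G$ be a stochastic game with generalized-reachability objective $\mathcal T$ of dimension $n$, and let $L,U:S\to 2^{[0,1]^n}$ be functions such that $L(s)\subseteq\mathfrak A(s)\subseteq U(s)$ for all $s\in S$. Let $U'=\mathsf{DEFLATE\_SECs}(G,L,U)$. Then for all $s\in S$: (i) $U'(s)\subseteq U(s)$ (monotonicity), and (ii) $\mathfrak A(s)\subseteq U'(s)$ (soundness).
   Context: Stochastic game $G=(S,S_\Box,S_\circ,s_0,A,\mathrm{Av},\delta)$: $S$ finite set of states partitioned into Maximizer states $S_\Box$ and Minimizer states $S_\circ$, $s_0$ initial state, $A$ finite action set, $\mathrm{Av}(s)\neq\emptyset$ the actions available in $s$, $\delta(s,a)$ a probability distribution on $S$ for $a\in\mathrm{Av}(s)$. Strategies are history-dependent and randomized; a pair $(\sigma,\tau)$ of Maximizer/Minimizer strategies and a start state $s$ induce a probability measure $\mathbb P^{\sigma,\tau}_s$ on infinite paths. Objective $\mathcal T=(T_1,\dots,T_n)$, $T_i\subseteq S$; $\Diamond T_i$ is the event of visiting $T_i$. $\mathfrak A(s)$ is the set of $\vec v\in\mathbb R^n_{\ge0}$ such that some Maximizer strategy $\sigma$ satisfies $\mathbb P^{\sigma,\tau}_s(\Diamond T_i)\ge\vec v_i$ for all Minimizer strategies $\tau$ and all $i$. Geometry: vectors compared componentwise; $\mathit{dwc}(X)=\{y\in\mathbb R^n_{\ge0}\mid\exists x\in X: y\le x\}$; $\mathbf 1=\mathit{dwc}(\{\vec 1\})$; $c\cdot X=\{cx\mid x\in X\}$; $X+Y$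 is the Minkowski sum; $\mathrm{conv}$ the convex hull. Directions: $[\vec v]=\{\lambda\vec v\mid\lambda>0\}$ for $\vec v\ne\vec 0$, $\mathsf D$ = set of directions $[\vec v]$, $\vec v\in[0,1]^n\setminus\{\vec0\}$. $X[\mathbf d]=\sup\{\|\vec x\|\mid\vec x\in X,[\vec x]=\mathbf d\}$, $\sup\emptyset=0$. A region is a subset $R\subseteq\mathsf D$; when intersected with sets of points, $R$ is identified with $\{\vec v\in[0,1]^n\mid [\vec v]\in R\}$. For $f:S\to 2^{\mathbb R^n}$, $s\in S$, $a\in\mathrm{Av}(s)$: $f(s,a):=\big(\mathit{dwc}(\{\mathbb 1_{\mathcal T}(s)\})+\sum_{s'\in S}\delta(s,a)(s')\cdot f(s')\big)\cap\mathbf 1$, where $\mathbb 1_{\mathcal T}(s)_i=1$ if $s\in T_i$ and $0$ otherwise. End components: $(s,a)$ exits $T\subseteq S$ if some $s'$ with $\delta(s,a)(s')>0$ is not in $T$; $\mathsf{Exits}(T)$ is the set of such pairs with $s\in T$, $a\in\mathrm{Av}(s)$. A nonempty $T\subseteq S$ is an end component (EC) if there is a nonempty set $B$ of actions available in $T$ such that no $(s,a)$ with $s\in T$, $a\in B\cap\mathrm{Av}(s)$ exits $T$, and any two states of $T$ are connected by a path staying in $T$ and using only actions of $B$. A maximal EC (MEC) is an EC not strictly contained in another EC; $\mathsf{MEC}(G)$ is the set of MECs of $G$. For $T\subseteq S$ and a restriction $\mathrm{Av}'$ of $\mathrm{Av}$, $\mathsf{MEC}(T|_{\mathrm{Av}'})$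 denotes the MECs of the game restricted to states in $T$ and actions in $\mathrm{Av}'$. Best exit: for $T\subseteq S$ and $f:S\to2^{\mathbb R^n}$, $\mathsf{exit}[f](T):=\big(\mathit{dwc}(\{\sum_{s\in T}\mathbb 1_{\mathcal T}(s)\})+\mathrm{conv}(\bigcup_{(s,a)\in\mathsf{Exits}(T),\,s\in S_\Box} f(s,a))\big)\cap\mathbf 1$, with the convention $\bigcup_\emptyset=\{\vec0\}$. Procedures. $\mathsf{GET\_REGIONS}(T,L)$: start with $\mathcal R=\{\mathsf D\}$; for each $s\in T\cap S_\circ$, for each $B\subseteq\mathrm{Av}(s)$ let $R_B=\{\mathbf d\in\mathsf D\mid B=\arg\min_{a\in\mathrm{Av}(s)}L(s,a)[\mathbf d]\}$, let $\mathcal R'$ be the set of nonempty $R_B$, and replace $\mathcal R$ by the common refinement of $\mathcal R$ and $\mathcal R'$ (coarsest partition containing all sets $R_1\cap R_2$, $R_1\in\mathcal R,R_2\in\mathcal R'$); return $\mathcal R$. $\mathsf{FIND\_SECs}(T,L,R)$: pick any $\mathbf d\in R$; let $\mathrm{Av}'(s)=\mathrm{Av}(s)$ for $s\notin T\cap S_\circ$ and $\mathrm{Av}'(s)=\{a\in\mathrm{Av}(s)\mid L(s,a)[\mathbf d]=\min_{b\in\mathrm{Av}(s)}L(s,b)[\mathbf d]\}$ for $s\in T\cap S_\circ$; return $\mathsf{MEC}(T|_{\mathrm{Av}'})$. $\mathsf{DEFLATE\_SECs}(G,L,U)$: for states $s$ not in any MEC set $U'(s)=U(s)$; for states in MECs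 initialize $U'(s)=\{\vec 0\}$; for each $T\in\mathsf{MEC}(G)$, let $\mathcal R=\mathsf{GET\_REGIONS}(T,L)$; for each $R\in\mathcal R$, let $\mathcal S=\mathsf{FIND\_SECs}(T,L,R)$, and for each $s\in T$: if $s\in C$ for some $C\in\mathcal S$ then $U'(s)\leftarrow U'(s)\cup(U(s)\cap\mathsf{exit}[U](C)\cap R)$, else $U'(s)\leftarrow U'(s)\cup(U(s)\cap R)$; return $U'$. *)

theory Defs
  imports "HOL-Probability.Probability"
begin

text \<open>States have a finite type 's (so S = UNIV), actions a finite type 'a (so A = UNIV).
  Maximizer states are smax; Minimizer states are the complement.
  Objective dimension n is the cardinality of the finite index type 'n;
  vectors in R^n are real^'n.\<close>

record ('s, 'a) sgame =
  smax  :: "'s set"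
  av    :: "'s \<Rightarrow> 'a set"
  delta :: "'s \<Rightarrow> 'a \<Rightarrow> 's pmf"

definition wf_game :: "('s::finite, 'a::finite) sgame \<Rightarrow> bool" where
  "wf_game G \<longleftrightarrow> (\<forall>s. av G s \<noteq> {})"

type_synonym ('s, 'a) hist = "('s \<times> 'a) list \<times> 's"

definition is_strategy :: "('s, 'a) sgame \<Rightarrow> 's set \<Rightarrow> (('s, 'a) hist \<Rightarrow> 'a pmf) \<Rightarrow> bool" where
  "is_strategy G P \<sigma> \<longleftrightarrow> (\<forall>h. snd h \<in> P \<longrightarrow> set_pmf (\<sigma> h) \<subseteq> av G (snd h))"

definition max_strategy where "max_strategy G \<sigma> \<longleftrightarrow> is_strategy G (smax G) \<sigma>"
definition min_strategy where "min_strategy G \<tau> \<longleftrightarrow> is_strategy G (- smax G) \<tau>"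

definition game_step ::
  "('s, 'a) sgame \<Rightarrow> (('s, 'a) hist \<Rightarrow> 'a pmf) \<Rightarrow> (('s, 'a) hist \<Rightarrow> 'a pmf)
     \<Rightarrow> ('s, 'a) hist \<Rightarrow> ('s, 'a) hist pmf" where
  "game_step G \<sigma> \<tau> h =
     bind_pmf (if snd h \<in> smax G then \<sigma> h else \<tau> h) (\<lambda>a.
     map_pmf (\<lambda>s'. (fst h @ [(snd h, a)], s')) (delta G (snd h) a))"

definition hist_dist ::
  "('s, 'a) sgame \<Rightarrow> (('s, 'a) hist \<Rightarrow> 'a pmf) \<Rightarrow> (('s, 'a) hist \<Rightarrow> 'a pmf)
     \<Rightarrow> 's \<Rightarrow> nat \<Rightarrow> ('s, 'a) hist pmf" where
  "hist_dist G \<sigma> \<tau> s k = ((\<lambda>D. bind_pmf D (game_step G \<sigma> \<tau>)) ^^ k) (return_pmf ([], s))"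

definition visits :: "('s, 'a) hist \<Rightarrow> 's set \<Rightarrow> bool" where
  "visits h X \<longleftrightarrow> (\<exists>p \<in> set (fst h). fst p \<in> X) \<or> snd h \<in> X"

text \<open>P^{sigma,tau}_s(Diamond X): the probability of eventually visiting X, obtained
  (by continuity of the path measure) as the limit/supremum of the probabilities of
  visiting X within the first k steps.\<close>
definition reach_prob ::
  "('s, 'a) sgame \<Rightarrow> (('s, 'a) hist \<Rightarrow> 'a pmf) \<Rightarrow> (('s, 'a) hist \<Rightarrow> 'a pmf)
     \<Rightarrow> 's \<Rightarrow> 's set \<Rightarrow> real" where
  "reach_prob G \<sigma> \<tau> s X = (SUP k. measure_pmf.prob (hist_dist G \<sigma> \<tau> s k) {h. visits h X})"

definition achievable ::
  "('s, 'a) sgame \<Rightarrow> ('n::finite \<Rightarrow> 's set) \<Rightarrow> 's \<Rightarrow> (real ^ 'n) set" where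
  "achievable G T s = {v. (\<forall>i. 0 \<le> v $ i) \<and>
      (\<exists>\<sigma>. max_strategy G \<sigma> \<and> (\<forall>\<tau>. min_strategy G \<tau> \<longrightarrow>
          (\<forall>i. reach_prob G \<sigma> \<tau> s (T i) \<ge> v $ i)))}"

definition dwc :: "(real ^ 'n::finite) set \<Rightarrow> (real ^ 'n) set" where
  "dwc X = {y. (\<forall>i. 0 \<le> y $ i) \<and> (\<exists>x\<in>X. y \<le> x)}"

definition one_box :: "(real ^ 'n::finite) set" where
  "one_box = dwc {1}"

definition unit_cube :: "(real ^ 'n::finite) set" where
  "unit_cube = {v. \<forall>i. 0 \<le> v $ i \<and> v $ i \<le> 1}"

definition mink_plus :: "(real ^ 'n::finite) set \<Rightarrow> (real ^ 'n) set \<Rightarrow> (real ^ 'n) set" where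
  "mink_plus X Y = {x + y | x y. x \<in> X \<and> y \<in> Y}"

definition dir :: "real ^ 'n::finite \<Rightarrow> (real ^ 'n) set" where
  "dir v = {l *\<^sub>R v | l. l > 0}"

definition Dirs :: "(real ^ 'n::finite) set set" where
  "Dirs = {dir v | v. v \<in> unit_cube \<and> v \<noteq> 0}"

text \<open>X[d] = sup of norms of points of X in direction d (sup of the empty set is 0).\<close>
definition in_dir :: "(real ^ 'n::finite) set \<Rightarrow> (real ^ 'n) set \<Rightarrow> real" where
  "in_dir X d = (let N = {norm x | x. x \<in> X \<and> dir x = d} in if N = {} then 0 else Sup N)"

text \<open>A region (set of directions) viewed as a set of points of [0,1]^n.\<close>
definition region_pts :: "(real ^ 'n::finite) set set \<Rightarrow> (real ^ 'n) set" where
  "region_pts R = {v \<in> unit_cube. dir v \<in> R}"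

definition ind_T :: "('n::finite \<Rightarrow> 's set) \<Rightarrow> 's \<Rightarrow> real ^ 'n" where
  "ind_T T s = (\<chi> i. if s \<in> T i then 1 else 0)"

definition succ_sum ::
  "('s::finite, 'a) sgame \<Rightarrow> ('s \<Rightarrow> (real ^ 'n::finite) set) \<Rightarrow> 's \<Rightarrow> 'a \<Rightarrow> (real ^ 'n) set" where
  "succ_sum G f s a = {(\<Sum>s'\<in>UNIV. pmf (delta G s a) s' *\<^sub>R x s') | x. \<forall>s'. x s' \<in> f s'}"

definition fsa ::
  "('s::finite, 'a) sgame \<Rightarrow> ('n::finite \<Rightarrow> 's set) \<Rightarrow> ('s \<Rightarrow> (real ^ 'n) set)
     \<Rightarrow> 's \<Rightarrow> 'a \<Rightarrow> (real ^ 'n) set" where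
  "fsa G T f s a = mink_plus (dwc {ind_T T s}) (succ_sum G f s a) \<inter> one_box"

definition is_EC :: "('s, 'a) sgame \<Rightarrow> 's set \<Rightarrow> ('s \<Rightarrow> 'a set) \<Rightarrow> 's set \<Rightarrow> bool" where
  "is_EC G Sr Avr C \<longleftrightarrow> C \<noteq> {} \<and> C \<subseteq> Sr \<and>
     (\<exists>B. B \<noteq> {} \<and> B \<subseteq> {(s, a). s \<in> C \<and> a \<in> Avr s} \<and>
        (\<forall>(s, a) \<in> B. set_pmf (delta G s a) \<subseteq> C) \<and>
        (\<forall>s\<in>C. \<forall>t\<in>C. (s, t) \<in> {(u, v). \<exists>a. (u, a) \<in> B \<and> v \<in> set_pmf (delta G u a)}\<^sup>*))"

definition MECs :: "('s, 'a) sgame \<Rightarrow> 's set \<Rightarrow> ('s \<Rightarrow> 'a set) \<Rightarrow> 's set set" where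
  "MECs G Sr Avr = {C. is_EC G Sr Avr C \<and> \<not> (\<exists>C'. is_EC G Sr Avr C' \<and> C \<subset> C')}"

definition exits :: "('s, 'a) sgame \<Rightarrow> 's set \<Rightarrow> ('s \<times> 'a) set" where
  "exits G C = {(s, a). s \<in> C \<and> a \<in> av G s \<and> \<not> set_pmf (delta G s a) \<subseteq> C}"

text \<open>Best exit exit[f](C); the union over an empty family of exits is {0}.\<close>
definition best_exit ::
  "('s::finite, 'a) sgame \<Rightarrow> ('n::finite \<Rightarrow> 's set) \<Rightarrow> ('s \<Rightarrow> (real ^ 'n) set)
     \<Rightarrow> 's set \<Rightarrow> (real ^ 'n) set" where
  "best_exit G T f C =
     (let E = {(s, a) \<in> exits G C. s \<in> smax G};
          X = (if E = {} then {0} else (\<Union>(s, a) \<in> E. fsa G T f s a))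
      in mink_plus (dwc {\<Sum>s\<in>C. ind_T T s}) (convex hull X) \<inter> one_box)"

definition argmin_acts ::
  "('s::finite, 'a) sgame \<Rightarrow> ('n::finite \<Rightarrow> 's set) \<Rightarrow> ('s \<Rightarrow> (real ^ 'n) set)
     \<Rightarrow> 's \<Rightarrow> (real ^ 'n) set \<Rightarrow> 'a set" where
  "argmin_acts G T L s d = {a \<in> av G s. \<forall>b \<in> av G s. in_dir (fsa G T L s a) d \<le> in_dir (fsa G T L s b) d}"

definition region_B ::
  "('s::finite, 'a) sgame \<Rightarrow> ('n::finite \<Rightarrow> 's set) \<Rightarrow> ('s \<Rightarrow> (real ^ 'n) set)
     \<Rightarrow> 's \<Rightarrow> 'a set \<Rightarrow> (real ^ 'n) set set" where
  "region_B G T L s B = {d \<in> Dirs. argmin_acts G T L s d = B}"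

text \<open>GET_REGIONS(C, L): the common refinement of {D} and, for every Minimizer state s in C,
  of the partition into the nonempty sets R_B; i.e. the nonempty intersections
  D \<inter> \<Inter>_{s} R_{B s}(s).\<close>
definition get_regions ::
  "('s::finite, 'a) sgame \<Rightarrow> ('n::finite \<Rightarrow> 's set) \<Rightarrow> 's set \<Rightarrow> ('s \<Rightarrow> (real ^ 'n) set)
     \<Rightarrow> (real ^ 'n) set set set" where
  "get_regions G T C L = {R. R \<noteq> {} \<and>
      (\<exists>B. R = {d \<in> Dirs. \<forall>s \<in> C \<inter> - smax G. d \<in> region_B G T L s (B s)})}"

definition find_SECs ::
  "('s::finite, 'a) sgame \<Rightarrow> ('n::finite \<Rightarrow> 's set) \<Rightarrow> 's set \<Rightarrow> ('s \<Rightarrow> (real ^ 'n) set)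
     \<Rightarrow> (real ^ 'n) set set \<Rightarrow> 's set set" where
  "find_SECs G T C L R =
     (let d = (SOME d. d \<in> R);
          Av' = (\<lambda>s. if s \<in> C \<inter> - smax G then argmin_acts G T L s d else av G s)
      in MECs G C Av')"

definition deflate_SECs ::
  "('s::finite, 'a) sgame \<Rightarrow> ('n::finite \<Rightarrow> 's set) \<Rightarrow> ('s \<Rightarrow> (real ^ 'n) set)
     \<Rightarrow> ('s \<Rightarrow> (real ^ 'n) set) \<Rightarrow> ('s \<Rightarrow> (real ^ 'n) set)" where
  "deflate_SECs G T L U s =
     (if \<exists>C \<in> MECs G UNIV (av G). s \<in> C then
        {0} \<union> (\<Union>C \<in> {C \<in> MECs G UNIV (av G). s \<in> C}.
                \<Union>R \<in> get_regions G T C L.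
                  (if \<exists>C' \<in> find_SECs G T C L R. s \<in> C'
                   then (\<Union>C' \<in> {C' \<in> find_SECs G T C L R. s \<in> C'}.
                           U s \<inter> best_exit G T U C' \<inter> region_pts R)
                   else U s \<inter> region_pts R))
      else U s)"

end

theory Submission
  imports Defs
begin


definition shift :: "(('s, 'a) hist \<Rightarrow> 'a pmf) \<Rightarrow> ('s \<times> 'a) list \<Rightarrow> (('s, 'a) hist \<Rightarrow> 'a pmf)" where
  "shift f p h = f (p @ fst h, snd h)"

definition prep :: "('s \<times> 'a) list \<Rightarrow> ('s, 'a) hist \<Rightarrow> ('s, 'a) hist" where
  "prep p h = (p @ fst h, snd h)"

lemma shift_shift[simp]: "shift (shift f p) q = shift f (p @ q)"
  by (auto simp: shift_def fun_eq_iff)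

lemma step_prep: "game_step G \<sigma> \<tau> (prep p h) = map_pmf (prep p) (game_step G (shift \<sigma> p) (shift \<tau> p) h)"
  by (simp add: game_step_def prep_def shift_def map_bind_pmf map_pmf_comp)

lemma iter_prep:
  "((\<lambda>D. bind_pmf D (game_step G \<sigma> \<tau>))^^m) (map_pmf (prep p) D0) =
   map_pmf (prep p) (((\<lambda>D. bind_pmf D (game_step G (shift \<sigma> p) (shift \<tau> p)))^^m) D0)"
proof (induction m)
  case 0 then show ?case by simp
next
  case (Suc m) then show ?case by (simp add: bind_map_pmf step_prep map_bind_pmf)
qed

lemma iter_bind:
  "((\<lambda>D. bind_pmf D (game_step G \<sigma> \<tau>))^^m) (bind_pmf A f) =
   bind_pmf A (\<lambda>x. ((\<lambda>D. bind_pmf D (game_step G \<sigma> \<tau>))^^m) (f x))"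
  by (induction m) (simp_all add: bind_assoc_pmf)

lemma hist_dist_Suc:
  "hist_dist G \<sigma> \<tau> s (Suc m) =
   bind_pmf (if s \<in> smax G then \<sigma> ([], s) else \<tau> ([], s)) (\<lambda>a. bind_pmf (delta G s a) (\<lambda>s'.
     map_pmf (prep [(s,a)]) (hist_dist G (shift \<sigma> [(s,a)]) (shift \<tau> [(s,a)]) s' m)))"
proof -
  have "hist_dist G \<sigma> \<tau> s (Suc m) = ((\<lambda>D. bind_pmf D (game_step G \<sigma> \<tau>))^^m) (game_step G \<sigma> \<tau> ([], s))"
    unfolding hist_dist_def by (simp add: funpow_Suc_right bind_return_pmf del: funpow.simps)
  also have "game_step G \<sigma> \<tau> ([], s) = bind_pmf (if s \<in> smax G then \<sigma> ([], s) else \<tau> ([], s))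
      (\<lambda>a. bind_pmf (delta G s a) (\<lambda>s'. map_pmf (prep [(s,a)]) (return_pmf ([], s'))))"
    by (simp add: game_step_def prep_def map_pmf_def[of _ "delta G s _"] bind_return_pmf)
  finally show ?thesis
    unfolding iter_bind iter_prep hist_dist_def by simp
qed

definition Pm where "Pm G \<sigma> \<tau> s X m = measure_pmf.prob (hist_dist G \<sigma> \<tau> s m) {h. visits h X}"

lemma measure_bind_finite:
  fixes M :: "'x::finite pmf"
  shows "measure_pmf.prob (bind_pmf M f) A = (\<Sum>x\<in>UNIV. pmf M x * measure_pmf.prob (f x) A)"
proof -
  have "ennreal (measure_pmf.prob (bind_pmf M f) A) = emeasure (bind_pmf M f) A"
    by (simp add: measure_pmf.emeasure_eq_measure)
  also have "\<dots> = (\<integral>\<^sup>+x. emeasure (f x) A \<partial>M)" by simp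
  also have "\<dots> = (\<Sum>x\<in>UNIV. emeasure (f x) A * pmf M x)"
    by (rule nn_integral_measure_pmf_support) auto
  also have "\<dots> = ennreal (\<Sum>x\<in>UNIV. pmf M x * measure_pmf.prob (f x) A)"
    by (simp add: measure_pmf.emeasure_eq_measure ennreal_mult sum_ennreal[symmetric] mult.commute)
  finally show ?thesis by (simp add: sum_nonneg)
qed

lemma visits_prep: "visits (prep [(s,a)] h) X \<longleftrightarrow> s \<in> X \<or> visits h X"
  by (auto simp: visits_def prep_def)

lemma Pm_0: "Pm G \<sigma> \<tau> s X 0 = (if s \<in> X then 1 else 0)"
  by (simp add: Pm_def hist_dist_def visits_def)

lemma Pm_Suc: fixes G :: "('s::finite, 'a::finite) sgame" shows
  "Pm G \<sigma> \<tau> s X (Suc m) = (if s \<in> X then 1 else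
     (\<Sum>a\<in>UNIV. pmf (if s \<in> smax G then \<sigma> ([], s) else \<tau> ([], s)) a *
        (\<Sum>s'\<in>UNIV. pmf (delta G s a) s' * Pm G (shift \<sigma> [(s,a)]) (shift \<tau> [(s,a)]) s' X m)))"
proof (cases "s \<in> X")
  case True
  have "{h. visits h X} \<supseteq> set_pmf (hist_dist G \<sigma> \<tau> s (Suc m))"
    using True by (auto simp: hist_dist_Suc visits_prep)
  then show ?thesis using True unfolding Pm_def
    by (simp add: measure_pmf.prob_eq_1 AE_measure_pmf_iff subset_eq)
next
  case False
  show ?thesis using False unfolding Pm_def hist_dist_Suc
    by (simp add: measure_bind_finite vimage_def visits_prep)
qed

lemma Pm_nonneg: "0 \<le> Pm G \<sigma> \<tau> s X m" by (simp add: Pm_def)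
lemma Pm_le1: "Pm G \<sigma> \<tau> s X m \<le> 1" by (simp add: Pm_def)

lemma Pm_mono_Suc: fixes G :: "('s::finite, 'a::finite) sgame" shows
  "Pm G \<sigma> \<tau> s X m \<le> Pm G \<sigma> \<tau> s X (Suc m)"
proof (induction m arbitrary: \<sigma> \<tau> s)
  case 0 then show ?case
    by (simp add: Pm_0 del: Pm_Suc) (simp add: Pm_Suc sum_nonneg Pm_nonneg)
next
  case (Suc m)
  show ?case
    unfolding Pm_Suc[of G \<sigma> \<tau> s X "Suc m"] Pm_Suc[of G \<sigma> \<tau> s X m]
    by (auto intro!: sum_mono mult_left_mono Suc.IH)
qed

lemma Pm_mono: fixes G :: "('s::finite, 'a::finite) sgame" shows
  "m \<le> k \<Longrightarrow> Pm G \<sigma> \<tau> s X m \<le> Pm G \<sigma> \<tau> s X k"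
  by (induction k rule: dec_induct) (auto intro: order_trans Pm_mono_Suc)

lemma reach_Pm: "reach_prob G \<sigma> \<tau> s X = (SUP m. Pm G \<sigma> \<tau> s X m)"
  by (simp add: reach_prob_def Pm_def)

lemma bdd_Pm: "bdd_above (range (Pm G \<sigma> \<tau> s X))"
  by (rule bdd_aboveI[of _ 1]) (auto simp: Pm_le1)

lemma Pm_le_reach: "Pm G \<sigma> \<tau> s X m \<le> reach_prob G \<sigma> \<tau> s X"
  unfolding reach_Pm by (rule cSUP_upper[OF _ bdd_Pm]) auto

lemma reach_nonneg: "0 \<le> reach_prob G \<sigma> \<tau> s X"
  using Pm_le_reach[of G \<sigma> \<tau> s X 0] Pm_nonneg[of G \<sigma> \<tau> s X 0] by linarith

lemma reach_le1: "reach_prob G \<sigma> \<tau> s X \<le> 1"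
  unfolding reach_Pm by (rule cSUP_least) (auto simp: Pm_le1)

lemma reach_leI: "(\<And>m. Pm G \<sigma> \<tau> s X m \<le> c) \<Longrightarrow> reach_prob G \<sigma> \<tau> s X \<le> c"
  unfolding reach_Pm by (rule cSUP_least) auto

definition first :: "('s, 'a) hist \<Rightarrow> 's" where
  "first h = (case fst h of [] \<Rightarrow> snd h | p # _ \<Rightarrow> fst p)"

lemma hist_dist_Suc': "hist_dist G \<sigma> \<tau> s (Suc m) = bind_pmf (hist_dist G \<sigma> \<tau> s m) (game_step G \<sigma> \<tau>)"
  by (simp add: hist_dist_def)

lemma first_step: "h' \<in> set_pmf (game_step G \<sigma> \<tau> h) \<Longrightarrow> first h' = first h"
  by (auto simp: game_step_def first_def split: list.splits)

lemma first_hist_dist: "h \<in> set_pmf (hist_dist G \<sigma> \<tau> s m) \<Longrightarrow> first h = s"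
proof (induction m arbitrary: h)
  case 0 then show ?case by (simp add: hist_dist_def first_def)
next
  case (Suc m) then show ?case
    unfolding hist_dist_Suc' by (auto dest: first_step)
qed

lemma hist_dist_local:
  assumes "\<And>h. first h = s \<Longrightarrow> \<tau>1 h = \<tau>2 h"
  shows "hist_dist G \<sigma> \<tau>1 s m = hist_dist G \<sigma> \<tau>2 s m"
proof (induction m)
  case 0 then show ?case by (simp add: hist_dist_def)
next
  case (Suc m)
  show ?case unfolding hist_dist_Suc' Suc
    by (rule bind_pmf_cong) (auto simp: game_step_def assms first_hist_dist)
qed

lemma reach_local:
  assumes "\<And>h. first h = s \<Longrightarrow> \<tau>1 h = \<tau>2 h"
  shows "reach_prob G \<sigma> \<tau>1 s X = reach_prob G \<sigma> \<tau>2 s X"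
proof -
  have "\<And>k. hist_dist G \<sigma> \<tau>1 s k = hist_dist G \<sigma> \<tau>2 s k" by (rule hist_dist_local) (rule assms)
  then show ?thesis unfolding reach_prob_def by simp
qed




definition msum :: "(real \<times> 'v::real_vector) multiset \<Rightarrow> real" where
  "msum E = sum_mset (image_mset fst E)"
definition vsum :: "(real \<times> 'v::real_vector) multiset \<Rightarrow> 'v" where
  "vsum E = sum_mset (image_mset (\<lambda>(w,g). w *\<^sub>R g) E)"

lemma msum_simps[simp]: "msum {#} = 0" "msum (add_mset x E) = fst x + msum E" "msum (E + F) = msum E + msum F"
  by (simp_all add: msum_def)
lemma vsum_simps[simp]: "vsum {#} = 0" "vsum (add_mset (w,g) E) = w *\<^sub>R g + vsum E" "vsum (E + F) = vsum E + vsum F"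
  by (simp_all add: vsum_def)

lemma sum_mset_nonneg_real: "(\<And>x. x \<in># M \<Longrightarrow> (0::real) \<le> x) \<Longrightarrow> 0 \<le> sum_mset M"
  by (induction M) auto

lemma msum_pos_ex: "(\<And>w g. (w,g) \<in># E \<Longrightarrow> 0 \<le> w) \<Longrightarrow> 0 < msum E \<Longrightarrow> \<exists>w g. (w,g) \<in># E \<and> 0 < w"
proof (induction E)
  case empty then show ?case by simp
next
  case (add x E)
  obtain w g where x: "x = (w,g)" by fastforce
  show ?case
  proof (cases "0 < w")
    case True then show ?thesis using x by auto
  next
    case False
    then have "w = 0" using add x by force
    then have "0 < msum E" using add x by simp
    then show ?thesis using add by force
  qed
qed

lemma msum_nonneg: "(\<And>w g. (w,g) \<in># E \<Longrightarrow> 0 \<le> w) \<Longrightarrow> 0 \<le> msum E"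
  by (induction E) (auto, smt (verit) prod.collapse)

lemma vsum_zero: "(\<And>w g. (w,g) \<in># E \<Longrightarrow> 0 \<le> w) \<Longrightarrow> msum E = 0 \<Longrightarrow> vsum E = 0"
proof (induction E)
  case empty then show ?case by simp
next
  case (add x E)
  obtain w g where x: "x = (w,g)" by fastforce
  have "0 \<le> msum E" using add by (intro msum_nonneg) auto
  moreover have "0 \<le> w" using add x by auto
  ultimately have "w = 0" "msum E = 0" using add x by auto
  then show ?case using add x by auto
qed

lemma conv_ms:
  assumes "convex S"
  shows "(\<And>w g. (w,g) \<in># E \<Longrightarrow> 0 \<le> w \<and> (0 < w \<longrightarrow> g \<in> S)) \<Longrightarrow> 0 < msum E \<Longrightarrow> (1 / msum E) *\<^sub>R vsum E \<in> S"
proof (induction E)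
  case empty then show ?case by simp
next
  case (add x E)
  obtain w g where x: "x = (w,g)" by fastforce
  have E0: "0 \<le> msum E" using add by (intro msum_nonneg) force
  have w0: "0 \<le> w" using add x by auto
  show ?case
  proof (cases "msum E = 0")
    case True
    then have "vsum E = 0" using add by (intro vsum_zero) force
    then show ?thesis using add x True by auto
  next
    case False
    then have IH: "(1 / msum E) *\<^sub>R vsum E \<in> S" using add E0 by force
    show ?thesis
    proof (cases "w = 0")
      case True then show ?thesis using IH x by simp
    next
      case False
      then have "g \<in> S" using add.prems(1)[of w g] x w0 by auto
      from mem_convex_alt[OF assms this IH w0 E0] False w0 E0 \<open>msum E \<noteq> 0\<close>
      have "(w / (w + msum E)) *\<^sub>R g + (msum E / (w + msum E)) *\<^sub>R ((1 / msum E) *\<^sub>R vsum E) \<in> S"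
        by simp
      moreover have "(w / (w + msum E)) *\<^sub>R g + (msum E / (w + msum E)) *\<^sub>R ((1 / msum E) *\<^sub>R vsum E)
          = (1 / msum (add_mset x E)) *\<^sub>R vsum (add_mset x E)"
        using x \<open>msum E \<noteq> 0\<close> by (simp add: scaleR_add_right divide_simps)
      ultimately show ?thesis by simp
    qed
  qed
qed

lemma sum_mset_mono_sub:
  fixes f :: "'x \<Rightarrow> real"
  assumes "M \<subseteq># N" "\<And>x. x \<in># N \<Longrightarrow> 0 \<le> f x"
  shows "sum_mset (image_mset f M) \<le> sum_mset (image_mset f N)"
proof -
  have "N = M + (N - M)" using assms(1) by (simp add: subset_mset.add_diff_inverse)
  moreover have "0 \<le> sum_mset (image_mset f (N - M))"
    using assms(2) by (intro sum_mset_nonneg_real) (auto dest: in_diffD)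
  ultimately show ?thesis by (metis image_mset_union le_add_same_cancel1 sum_mset.union)
qed

lemma elem_le_sum_mset:
  fixes f :: "'x \<Rightarrow> real"
  assumes "x \<in># N" "\<And>x. x \<in># N \<Longrightarrow> 0 \<le> f x"
  shows "f x \<le> sum_mset (image_mset f N)"
  using sum_mset_mono_sub[of "{#x#}" N f] assms by simp

lemma phi_eq: "sum_mset (image_mset (\<lambda>(w,g). w * (a \<bullet> g - c)) E) = a \<bullet> vsum E - msum E * c"
  by (induction E) (auto simp: algebra_simps inner_add_right)

lemma bary:
  fixes E :: "nat \<Rightarrow> (real \<times> 'v::euclidean_space) multiset" and K :: "'v set"
  assumes K: "convex K" "0 \<in> K"
    and mono: "\<And>m. E m \<subseteq># E (Suc m)"
    and el: "\<And>m w g. (w,g) \<in># E m \<Longrightarrow> 0 \<le> w \<and> g \<in> K"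
    and mass: "\<And>m. msum (E m) \<le> 1"
    and lim: "(\<lambda>m. vsum (E m)) \<longlonglongrightarrow> y"
  shows "y \<in> K"
proof -
  define used where "used = {g. \<exists>m w. (w,g) \<in># E m \<and> 0 < w}"
  have used_K: "used \<subseteq> K" using el by (auto simp: used_def)
  have Mnn: "0 \<le> msum (E m)" for m using el by (intro msum_nonneg) force
  have Minc: "incseq (\<lambda>m. msum (E m))"
  proof (rule incseq_SucI)
    fix m show "msum (E m) \<le> msum (E (Suc m))"
      unfolding msum_def using el by (intro sum_mset_mono_sub mono) force
  qed
  define M where "M = (SUP m. msum (E m))"
  have bddM: "bdd_above (range (\<lambda>m. msum (E m)))" using mass by (intro bdd_aboveI[of _ 1]) auto
  have Mlim: "(\<lambda>m. msum (E m)) \<longlonglongrightarrow> M" unfolding M_def by (rule LIMSEQ_incseq_SUP[OF bddM Minc])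
  have M1: "M \<le> 1" unfolding M_def using mass by (intro cSUP_least) auto
  define Q where "Q = used \<union> (if M < 1 then {0} else {})"
  define K1 where "K1 = convex hull Q"
  have K1K: "K1 \<subseteq> K" unfolding K1_def Q_def using used_K K by (intro hull_minimal) auto
  have cK1: "convex K1" unfolding K1_def by simp
  have elK1: "0 < w \<Longrightarrow> (w,g) \<in># E m \<Longrightarrow> g \<in> K1" for w g m
    unfolding K1_def Q_def used_def by (rule hull_inc) auto
  have closK1: "y \<in> closure K1"
  proof (cases "M < 1")
    case True
    have zK1: "0 \<in> K1" unfolding K1_def Q_def using True by (intro hull_inc) auto
    have "vsum (E m) \<in> K1" for m
    proof (cases "msum (E m) = 0")
      case True then show ?thesis using vsum_zero[of "E m"] el zK1 by force
    next
      case False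
      then have pos: "0 < msum (E m)" using Mnn[of m] by simp
      have z: "(1 / msum (E m)) *\<^sub>R vsum (E m) \<in> K1"
        using el elK1 by (intro conv_ms[OF cK1] pos) force
      from convexD[OF cK1 z zK1, of "msum (E m)" "1 - msum (E m)"] pos mass[of m]
      show ?thesis by simp
    qed
    then show ?thesis using closure_subset
      by (intro Lim_in_closed_set[OF _ _ _ lim]) (auto intro!: always_eventually)
  next
    case False
    then have "M = 1" using M1 by simp
    then have ev: "eventually (\<lambda>m. 0 < msum (E m)) sequentially"
      using Mlim by (intro order_tendstoD) auto
    have "(\<lambda>m. (1 / msum (E m)) *\<^sub>R vsum (E m)) \<longlonglongrightarrow> (1 / M) *\<^sub>R y"
      using \<open>M = 1\<close> by (intro tendsto_intros Mlim lim) auto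
    then have l2: "(\<lambda>m. (1 / msum (E m)) *\<^sub>R vsum (E m)) \<longlonglongrightarrow> y" using \<open>M = 1\<close> by simp
    show ?thesis
    proof (rule Lim_in_closed_set[OF _ _ _ l2])
      show "eventually (\<lambda>m. (1 / msum (E m)) *\<^sub>R vsum (E m) \<in> closure K1) sequentially"
        using ev proof eventually_elim
        case (elim m)
        have "(1 / msum (E m)) *\<^sub>R vsum (E m) \<in> K1"
          using el elK1 by (intro conv_ms[OF cK1] elim) force
        then show ?case using closure_subset by blast
      qed
    qed auto
  qed
  show ?thesis
  proof (cases "y \<in> rel_interior K1")
    case True
    then show ?thesis using rel_interior_subset K1K by blast
  next
    case False
    obtain a where a: "a \<noteq> 0" "\<And>z. z \<in> closure K1 \<Longrightarrow> a \<bullet> y \<le> a \<bullet> z"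
      "\<And>z. z \<in> rel_interior K1 \<Longrightarrow> a \<bullet> y < a \<bullet> z"
      using supporting_hyperplane_relative_frontier[OF cK1 closK1 False] by blast
    define \<Phi> where "\<Phi> m = sum_mset (image_mset (\<lambda>(w,g). w * (a \<bullet> g - a \<bullet> y)) (E m))" for m
    have term_nn: "0 \<le> (case x of (w,g) \<Rightarrow> w * (a \<bullet> g - a \<bullet> y))" if "x \<in># E m" for x m
    proof -
      obtain w g where x: "x = (w,g)" by fastforce
      show ?thesis
      proof (cases "w = 0")
        case False
        then have "0 < w" using el that x by force
        then have "g \<in> closure K1" using elK1 that x closure_subset by blast
        then show ?thesis using a(2) x \<open>0 < w\<close> by simp
      qed (simp add: x)
    qed
    have Phi_nn: "0 \<le> \<Phi> m" for m unfolding \<Phi>_def using term_nn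
      by (intro sum_mset_nonneg_real) (auto simp del: split_paired_all)
    have Phi_inc: "incseq \<Phi>"
      by (rule incseq_SucI) (unfold \<Phi>_def, intro sum_mset_mono_sub mono, use term_nn in blast)
    have Phi_eq: "\<Phi> m = a \<bullet> vsum (E m) - msum (E m) * (a \<bullet> y)" for m
      unfolding \<Phi>_def by (rule phi_eq)
    have Phi_lim: "\<Phi> \<longlonglongrightarrow> a \<bullet> y - M * (a \<bullet> y)"
      unfolding Phi_eq by (intro tendsto_intros lim Mlim)
    have lim_le: "a \<bullet> y - M * (a \<bullet> y) \<le> 0"
    proof (cases "M < 1")
      case True
      then have "0 \<in> K1" unfolding K1_def Q_def by (auto intro: hull_inc)
      then have "0 \<in> closure K1" using closure_subset by blast
      then have "a \<bullet> y \<le> 0" using a(2)[of 0] by simp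
      then have "(1 - M) * (a \<bullet> y) \<le> 0" using True by (intro mult_nonneg_nonpos) auto
      then show ?thesis by (simp add: algebra_simps)
    next
      case False then show ?thesis using M1 by simp
    qed
    have Phi0: "\<Phi> m = 0" for m using incseq_le[OF Phi_inc Phi_lim, of m] lim_le Phi_nn[of m] by simp
    have lim0: "a \<bullet> y - M * (a \<bullet> y) = 0"
    proof -
      have "\<Phi> = (\<lambda>_. 0)" using Phi0 by (intro ext) simp
      then show ?thesis using Phi_lim LIMSEQ_const_iff by metis
    qed
    have onH: "q \<in> Q \<Longrightarrow> a \<bullet> q = a \<bullet> y" for q
    proof -
      assume "q \<in> Q"
      then consider "q \<in> used" | "M < 1" "q = 0" unfolding Q_def by (auto split: if_splits)
      then show ?thesis
      proof cases
        case 1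
        then obtain m w where mw: "(w,q) \<in># E m" "0 < w" unfolding used_def by auto
        have "(\<lambda>(w,g). w * (a \<bullet> g - a \<bullet> y)) (w,q) \<le> \<Phi> m"
          unfolding \<Phi>_def by (rule elem_le_sum_mset[OF mw(1)]) (use term_nn in blast)
        then have "w * (a \<bullet> q - a \<bullet> y) \<le> \<Phi> m" by simp
        moreover have "q \<in> closure K1" using mw elK1 closure_subset by blast
        ultimately have "w * (a \<bullet> q - a \<bullet> y) \<le> 0" using Phi0[of m] by simp
        then have "a \<bullet> q - a \<bullet> y \<le> 0" using mw(2) by (simp add: mult_le_0_iff)
        moreover have "a \<bullet> y \<le> a \<bullet> q" using a(2) \<open>q \<in> closure K1\<close> by blast
        ultimately show ?thesis by simp
      next
        case 2
        then have "(1 - M) * (a \<bullet> y) = 0" using lim0 by (simp add: algebra_simps)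
        then show ?thesis using 2 by simp
      qed
    qed
    have sub: "K1 \<subseteq> {z. a \<bullet> z = a \<bullet> y}" unfolding K1_def
    proof (rule hull_minimal)
      show "Q \<subseteq> {z. a \<bullet> z = a \<bullet> y}" using onH by blast
    qed (rule convex_hyperplane)
    have "Q \<noteq> {}"
    proof (cases "M < 1")
      case True then show ?thesis unfolding Q_def by auto
    next
      case False
      then have "M = 1" using M1 by simp
      then have "eventually (\<lambda>m. 0 < msum (E m)) sequentially"
        using Mlim by (intro order_tendstoD) auto
      then obtain N where "\<forall>n\<ge>N. 0 < msum (E n)" unfolding eventually_sequentially by blast
      then have "0 < msum (E N)" by blast
      moreover have "\<And>w g. (w,g) \<in># E N \<Longrightarrow> 0 \<le> w" using el by blast
      ultimately obtain w g where "(w,g) \<in># E N" "0 < w"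
        using msum_pos_ex[of "E N"] by blast
      then show ?thesis unfolding Q_def used_def by auto
    qed
    then have "K1 \<noteq> {}" unfolding K1_def by simp
    then obtain z where z: "z \<in> rel_interior K1" using rel_interior_eq_empty[OF cK1] by blast
    then have "a \<bullet> y < a \<bullet> z" by (rule a(3))
    moreover have "z \<in> K1" using z rel_interior_subset by blast
    ultimately show ?thesis using sub by auto
  qed
qed




definition dflt :: "('s, 'a) sgame \<Rightarrow> ('s, 'a) hist \<Rightarrow> 'a pmf" where
  "dflt G h = return_pmf (SOME a. a \<in> av G (snd h))"

lemma dflt_strat: "wf_game G \<Longrightarrow> is_strategy G P (dflt G)"
  unfolding is_strategy_def dflt_def wf_game_def by (auto simp: some_in_eq)

definition Wv :: "('s::finite, 'a::finite) sgame \<Rightarrow> ('n::finite \<Rightarrow> 's set) \<Rightarrow> (('s, 'a) hist \<Rightarrow> 'a pmf) \<Rightarrow> 's \<Rightarrow> real ^ 'n" where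
  "Wv G T \<sigma> s = (\<chi> j. INF \<tau> \<in> {\<tau>. min_strategy G \<tau>}. reach_prob G \<sigma> \<tau> s (T j))"

lemma bdd_reach: "bdd_below ((\<lambda>\<tau>. reach_prob G \<sigma> \<tau> s X) ` A)"
  by (rule bdd_belowI[of _ 0]) (auto simp: reach_nonneg)

lemma W_lower: "min_strategy G \<tau> \<Longrightarrow> Wv G T \<sigma> s $ j \<le> reach_prob G \<sigma> \<tau> s (T j)"
  unfolding Wv_def by (auto intro!: cINF_lower bdd_reach)

lemma min_ex: "wf_game G \<Longrightarrow> {\<tau>. min_strategy G \<tau>} \<noteq> {}"
  using dflt_strat[of G "- smax G"] by (auto simp: min_strategy_def)

lemma W_nonneg: "wf_game G \<Longrightarrow> 0 \<le> Wv G T \<sigma> s $ j"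
  unfolding Wv_def using min_ex[of G] by (auto intro!: cINF_greatest simp: reach_nonneg)

lemma W_ge: "wf_game G \<Longrightarrow> (\<And>\<tau>. min_strategy G \<tau> \<Longrightarrow> c \<le> reach_prob G \<sigma> \<tau> s (T j)) \<Longrightarrow> c \<le> Wv G T \<sigma> s $ j"
  unfolding Wv_def using min_ex[of G] by (auto intro!: cINF_greatest)

lemma W_eps: assumes "wf_game G" "0 < \<epsilon>"
  shows "\<exists>\<tau>. min_strategy G \<tau> \<and> reach_prob G \<sigma> \<tau> s (T j) \<le> Wv G T \<sigma> s $ j + \<epsilon>"
proof -
  have "(INF \<tau> \<in> {\<tau>. min_strategy G \<tau>}. reach_prob G \<sigma> \<tau> s (T j)) < Wv G T \<sigma> s $ j + \<epsilon>"
    using assms by (simp add: Wv_def)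
  then obtain \<tau> where "min_strategy G \<tau>" "reach_prob G \<sigma> \<tau> s (T j) < Wv G T \<sigma> s $ j + \<epsilon>"
    using cINF_less_iff[OF min_ex[OF assms(1)] bdd_reach] by auto
  then show ?thesis by (auto intro!: exI[of _ \<tau>])
qed

lemma max_shift: "max_strategy G \<sigma> \<Longrightarrow> max_strategy G (shift \<sigma> p)"
  by (auto simp: max_strategy_def is_strategy_def shift_def)

lemma W_ach: "wf_game G \<Longrightarrow> max_strategy G \<sigma> \<Longrightarrow> Wv G T \<sigma> s \<in> achievable G T s"
  unfolding achievable_def using W_nonneg W_lower by blast

lemma ach_down: assumes "v \<in> achievable G T s" "\<And>j. 0 \<le> v' $ j \<and> v' $ j \<le> v $ j" shows "v' \<in> achievable G T s"
proof -
  obtain \<sigma> where "max_strategy G \<sigma>" "\<And>\<tau> i. min_strategy G \<tau> \<Longrightarrow> v $ i \<le> reach_prob G \<sigma> \<tau> s (T i)"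
    using assms(1) unfolding achievable_def by blast
  then show ?thesis unfolding achievable_def using assms(2) order_trans by blast
qed

lemma ach_cube: assumes "wf_game G" "v \<in> achievable G T s" shows "0 \<le> v $ j \<and> v $ j \<le> 1"
proof -
  obtain \<sigma> where "\<And>\<tau> i. min_strategy G \<tau> \<Longrightarrow> v $ i \<le> reach_prob G \<sigma> \<tau> s (T i)" "\<And>i. 0 \<le> v $ i"
    using assms(2) unfolding achievable_def by blast
  moreover have "min_strategy G (dflt G)" using dflt_strat[OF assms(1)] by (simp add: min_strategy_def)
  ultimately have "v $ j \<le> reach_prob G \<sigma> (dflt G) s (T j)" "0 \<le> v $ j" by auto
  then show ?thesis using reach_le1[of G \<sigma> "dflt G" s "T j"] by linarith
qed

lemma zero_ach: "wf_game G \<Longrightarrow> 0 \<in> achievable G T s"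
  unfolding achievable_def using dflt_strat[of G "smax G"]
  by (auto simp: max_strategy_def reach_nonneg intro!: exI[of _ "dflt G"])

lemma sum_return: fixes x :: "'x::finite" shows "(\<Sum>a\<in>UNIV. pmf (return_pmf x) a * f a) = (f x :: real)"
proof -
  have "(\<Sum>a\<in>UNIV. pmf (return_pmf x) a * f a) = (\<Sum>a\<in>UNIV. if a = x then f x else 0)"
    by (intro sum.cong) (auto simp: indicator_def)
  then show ?thesis by (simp add: sum.delta)
qed

lemma sum_pmf_UNIV: "(\<Sum>x\<in>(UNIV::'x::finite set). pmf p x) = 1"
  by (rule sum_pmf_eq_1) auto

lemma msum_sum: "finite A \<Longrightarrow> msum (\<Sum>x\<in>A. M x) = (\<Sum>x\<in>A. msum (M x))"
  by (induction A rule: finite_induct) auto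
lemma vsum_sum: "finite A \<Longrightarrow> vsum (\<Sum>x\<in>A. M x) = (\<Sum>x\<in>A. vsum (M x))"
  by (induction A rule: finite_induct) auto

definition scl :: "real \<Rightarrow> real \<times> 'v \<Rightarrow> real \<times> 'v" where "scl c = (\<lambda>(w,g). (c * w, g))"

lemma msum_scl: "msum (image_mset (scl c) M) = c * msum M"
  by (induction M) (auto simp: scl_def algebra_simps)
lemma vsum_scl: "vsum (image_mset (scl c) M) = c *\<^sub>R vsum (M :: (real \<times> 'v::real_vector) multiset)"
  by (induction M) (auto simp: scl_def scaleR_add_right)

lemma sum_mset_sum_mono: "finite A \<Longrightarrow> (\<And>x. x \<in> A \<Longrightarrow> M x \<subseteq># N x) \<Longrightarrow> (\<Sum>x\<in>A. M x) \<subseteq># (\<Sum>x\<in>A. N x)"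
  by (induction A rule: finite_induct) (auto intro: subset_mset.add_mono)

lemma in_sum_mset_set: "finite A \<Longrightarrow> y \<in># (\<Sum>x\<in>A. M x) \<Longrightarrow> \<exists>x\<in>A. y \<in># M x"
  by (induction A rule: finite_induct) auto

lemma vsum_comp: "vsum E $ j = sum_mset (image_mset (\<lambda>(w,g). w * g $ j) E)"
  by (induction E) auto

lemma vsum_le_msum: "(\<And>w g. (w,g) \<in># E \<Longrightarrow> 0 \<le> w \<and> g $ j \<le> 1) \<Longrightarrow> vsum E $ j \<le> msum E"
proof (induction E)
  case empty then show ?case by simp
next
  case (add x E)
  obtain w g where x: "x = (w,g)" by fastforce
  have "w * g $ j \<le> w" using add.prems[of w g] x by (simp add: mult_left_le)
  moreover have "vsum E $ j \<le> msum E" by (rule add.IH) (use add.prems in auto)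
  ultimately show ?case using x by auto
qed




locale kc =
  fixes G :: "('s::finite, 'a::finite) sgame" and T :: "'n::finite \<Rightarrow> 's set"
    and C :: "'s set" and st :: "'s \<Rightarrow> 'a"
  assumes wf: "wf_game G"
    and st: "\<And>u. u \<in> C \<Longrightarrow> st u \<in> av G u \<and> set_pmf (delta G u (st u)) \<subseteq> C"
begin

definition pt :: "(('s, 'a) hist \<Rightarrow> 'a pmf) \<Rightarrow> 's \<Rightarrow> 'a \<Rightarrow> real ^ 'n" where
  "pt \<sigma> s a = (\<Sum>s'\<in>UNIV. pmf (delta G s a) s' *\<^sub>R Wv G T (shift \<sigma> [(s,a)]) s')"

fun ev :: "nat \<Rightarrow> (('s, 'a) hist \<Rightarrow> 'a pmf) \<Rightarrow> 's \<Rightarrow> (real \<times> (real ^ 'n)) multiset" where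
  "ev 0 \<sigma> s = {#}"
| "ev (Suc m) \<sigma> s = (if s \<notin> smax G then
      (\<Sum>s'\<in>UNIV. image_mset (scl (pmf (delta G s (st s)) s')) (ev m (shift \<sigma> [(s, st s)]) s'))
    else (\<Sum>a\<in>UNIV. if (s,a) \<in> exits G C then {#(pmf (\<sigma> ([],s)) a, pt \<sigma> s a)#}
      else (\<Sum>s'\<in>UNIV. image_mset (scl (pmf (\<sigma> ([],s)) a * pmf (delta G s a) s')) (ev m (shift \<sigma> [(s,a)]) s'))))"

declare ev.simps(2)[simp del]

definition PD :: "(real ^ 'n) set" where
  "PD = {(\<Sum>s'\<in>UNIV. pmf (delta G s a) s' *\<^sub>R x s') | s a x. (s,a) \<in> exits G C \<and> s \<in> smax G \<and> (\<forall>s'. x s' \<in> achievable G T s')}"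

lemma ev_mono: "ev m \<sigma> s \<subseteq># ev (Suc m) \<sigma> s"
proof (induction m arbitrary: \<sigma> s)
  case 0 then show ?case by simp
next
  case (Suc m)
  show ?case
    unfolding ev.simps(2)[of "Suc m" \<sigma> s] ev.simps(2)[of m \<sigma> s]
    by (auto intro!: sum_mset_sum_mono image_mset_subseteq_mono Suc.IH simp del: ev.simps)
qed

lemma in_sum_UNIV: "y \<in># (\<Sum>x\<in>(UNIV::'x::finite set). M x) \<Longrightarrow> \<exists>x. y \<in># M x"
  using in_sum_mset_set[of UNIV y M] by auto

lemma ev_cases:
  assumes "(w,g) \<in># ev (Suc m) \<sigma> s"
  obtains (min) s' w' where "s \<notin> smax G" "(w',g) \<in># ev m (shift \<sigma> [(s, st s)]) s'" "w = pmf (delta G s (st s)) s' * w'"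
  | (ex) a where "s \<in> smax G" "(s,a) \<in> exits G C" "w = pmf (\<sigma> ([],s)) a" "g = pt \<sigma> s a"
  | (nex) a s' w' where "s \<in> smax G" "(s,a) \<notin> exits G C" "(w',g) \<in># ev m (shift \<sigma> [(s, a)]) s'"
      "w = pmf (\<sigma> ([],s)) a * pmf (delta G s a) s' * w'"
proof (cases "s \<in> smax G")
  case False
  then have "(w,g) \<in># (\<Sum>s'\<in>UNIV. image_mset (scl (pmf (delta G s (st s)) s')) (ev m (shift \<sigma> [(s, st s)]) s'))"
    using assms by (simp add: ev.simps(2))
  then obtain s' where "(w,g) \<in># image_mset (scl (pmf (delta G s (st s)) s')) (ev m (shift \<sigma> [(s, st s)]) s')"
    by (blast dest: in_sum_UNIV)
  then show ?thesis using that(1) False by (auto simp: scl_def)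
next
  case True
  then have "(w,g) \<in># (\<Sum>a\<in>UNIV. if (s,a) \<in> exits G C then {#(pmf (\<sigma> ([],s)) a, pt \<sigma> s a)#}
      else (\<Sum>s'\<in>UNIV. image_mset (scl (pmf (\<sigma> ([],s)) a * pmf (delta G s a) s')) (ev m (shift \<sigma> [(s,a)]) s')))"
    using assms by (simp add: ev.simps(2))
  then obtain a where a: "(w,g) \<in># (if (s,a) \<in> exits G C then {#(pmf (\<sigma> ([],s)) a, pt \<sigma> s a)#}
      else (\<Sum>s'\<in>UNIV. image_mset (scl (pmf (\<sigma> ([],s)) a * pmf (delta G s a) s')) (ev m (shift \<sigma> [(s,a)]) s')))"
    by (blast dest: in_sum_UNIV)
  show ?thesis
  proof (cases "(s,a) \<in> exits G C")
    case True then show ?thesis using a that(2) \<open>s \<in> smax G\<close> by auto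
  next
    case False
    then have "(w,g) \<in># (\<Sum>s'\<in>UNIV. image_mset (scl (pmf (\<sigma> ([],s)) a * pmf (delta G s a) s')) (ev m (shift \<sigma> [(s,a)]) s'))"
      using a by simp
    then obtain s' where "(w,g) \<in># image_mset (scl (pmf (\<sigma> ([],s)) a * pmf (delta G s a) s')) (ev m (shift \<sigma> [(s,a)]) s')"
      by (blast dest: in_sum_UNIV)
    then show ?thesis using that(3) False \<open>s \<in> smax G\<close> by (auto simp: scl_def)
  qed
qed

lemma ev_w: "(w,g) \<in># ev m \<sigma> s \<Longrightarrow> 0 \<le> w"
proof (induction m arbitrary: \<sigma> s w g)
  case 0 then show ?case by simp
next
  case (Suc m)
  from Suc.prems show ?case
    by (cases rule: ev_cases) (auto dest: Suc.IH)
qed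

lemma ev_el: "max_strategy G \<sigma> \<Longrightarrow> (w,g) \<in># ev m \<sigma> s \<Longrightarrow> g \<in> PD"
proof (induction m arbitrary: \<sigma> s w g)
  case 0 then show ?case by simp
next
  case (Suc m)
  from Suc.prems(2) show ?case
  proof (cases rule: ev_cases)
    case (ex a)
    then show ?thesis
      unfolding PD_def pt_def using W_ach[OF wf max_shift[OF Suc.prems(1)]] by blast
  qed (auto dest: Suc.IH[OF max_shift[OF Suc.prems(1)]])
qed

lemma ev_mass: "msum (ev m \<sigma> s) \<le> 1"
proof (induction m arbitrary: \<sigma> s)
  case 0 then show ?case by simp
next
  case (Suc m)
  show ?case
  proof (cases "s \<in> smax G")
    case False
    have "msum (ev (Suc m) \<sigma> s) = (\<Sum>s'\<in>UNIV. pmf (delta G s (st s)) s' * msum (ev m (shift \<sigma> [(s, st s)]) s'))"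
      using False by (simp add: msum_sum msum_scl ev.simps(2))
    also have "\<dots> \<le> (\<Sum>s'\<in>UNIV. pmf (delta G s (st s)) s')"
      by (intro sum_mono mult_right_le_one_le Suc.IH msum_nonneg) (auto dest: ev_w)
    finally show ?thesis by (simp add: sum_pmf_UNIV)
  next
    case True
    have "msum (ev (Suc m) \<sigma> s) = (\<Sum>a\<in>UNIV. if (s,a) \<in> exits G C then pmf (\<sigma> ([],s)) a
       else (\<Sum>s'\<in>UNIV. pmf (\<sigma> ([],s)) a * pmf (delta G s a) s' * msum (ev m (shift \<sigma> [(s, a)]) s')))"
      using True by (simp add: msum_sum msum_scl ev.simps(2) if_distrib cong: if_cong)
    also have "\<dots> \<le> (\<Sum>a\<in>UNIV. pmf (\<sigma> ([],s)) a)"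
    proof (intro sum_mono)
      fix a
      have "(\<Sum>s'\<in>UNIV. pmf (\<sigma> ([],s)) a * pmf (delta G s a) s' * msum (ev m (shift \<sigma> [(s, a)]) s'))
          \<le> (\<Sum>s'\<in>UNIV. pmf (\<sigma> ([],s)) a * pmf (delta G s a) s')"
        by (intro sum_mono mult_right_le_one_le Suc.IH msum_nonneg) (auto dest: ev_w)
      also have "\<dots> = pmf (\<sigma> ([],s)) a" by (simp add: sum_distrib_left[symmetric] sum_pmf_UNIV)
      finally show "(if (s,a) \<in> exits G C then pmf (\<sigma> ([],s)) a
       else (\<Sum>s'\<in>UNIV. pmf (\<sigma> ([],s)) a * pmf (delta G s a) s' * msum (ev m (shift \<sigma> [(s, a)]) s'))) \<le> pmf (\<sigma> ([],s)) a"
        by simp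
    qed
    finally show ?thesis by (simp add: sum_pmf_UNIV)
  qed
qed

lemma vsum_ev_Suc: "vsum (ev (Suc m) \<sigma> s) = (if s \<notin> smax G then
      (\<Sum>s'\<in>UNIV. pmf (delta G s (st s)) s' *\<^sub>R vsum (ev m (shift \<sigma> [(s, st s)]) s'))
    else (\<Sum>a\<in>UNIV. pmf (\<sigma> ([],s)) a *\<^sub>R (if (s,a) \<in> exits G C then pt \<sigma> s a
      else (\<Sum>s'\<in>UNIV. pmf (delta G s a) s' *\<^sub>R vsum (ev m (shift \<sigma> [(s,a)]) s')))))"
  by (auto simp: ev.simps(2) vsum_sum vsum_scl scaleR_sum_right intro!: sum.cong)

lemma sum_pmf_bound:
  fixes p :: "'x::finite pmf"
  assumes "\<And>x. x \<in> set_pmf p \<Longrightarrow> f x \<le> g x + \<epsilon>"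
  shows "(\<Sum>x\<in>UNIV. pmf p x * f x) \<le> (\<Sum>x\<in>UNIV. pmf p x * g x) + \<epsilon>"
proof -
  have "(\<Sum>x\<in>UNIV. pmf p x * f x) \<le> (\<Sum>x\<in>UNIV. pmf p x * (g x + \<epsilon>))"
  proof (rule sum_mono)
    fix x show "pmf p x * f x \<le> pmf p x * (g x + \<epsilon>)"
    proof (cases "x \<in> set_pmf p")
      case True then show ?thesis using assms by (simp add: mult_left_mono)
    next
      case False then show ?thesis by (simp add: set_pmf_iff)
    qed
  qed
  also have "\<dots> = (\<Sum>x\<in>UNIV. pmf p x * g x) + \<epsilon>"
    by (simp add: algebra_simps sum.distrib sum_distrib_left[symmetric] sum_pmf_UNIV)
  finally show ?thesis .
qed

definition PF :: "('s \<times> 'a) list \<Rightarrow> 's \<Rightarrow> bool" where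
  "PF pa la \<longleftrightarrow> (\<forall>(u,b)\<in>set pa. u \<in> C \<and> (u \<in> smax G \<longrightarrow> (u,b) \<notin> exits G C)) \<and> la \<in> C"

definition Good :: "'n \<Rightarrow> real \<Rightarrow> (('s, 'a) hist \<Rightarrow> 'a pmf) \<Rightarrow> (('s, 'a) hist \<Rightarrow> 'a pmf) \<Rightarrow> bool" where
  "Good i \<epsilon> \<sigma> \<tau> \<longleftrightarrow> (\<forall>pa la. PF pa la \<and> la \<notin> smax G \<longrightarrow> \<tau> (pa,la) = return_pmf (st la)) \<and>
     (\<forall>pa la a s'. PF pa la \<and> la \<in> smax G \<and> (la,a) \<in> exits G C \<longrightarrow>
        reach_prob G (shift \<sigma> (pa@[(la,a)])) (shift \<tau> (pa@[(la,a)])) s' (T i)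
          \<le> Wv G T (shift \<sigma> (pa@[(la,a)])) s' $ i + \<epsilon>)"

lemma Good_shift:
  assumes "Good i \<epsilon> \<sigma> \<tau>" "u \<in> C" "u \<in> smax G \<longrightarrow> (u,b) \<notin> exits G C"
  shows "Good i \<epsilon> (shift \<sigma> [(u,b)]) (shift \<tau> [(u,b)])"
proof -
  have PF: "PF pa la \<Longrightarrow> PF ((u,b)#pa) la" for pa la
    using assms(2,3) by (auto simp: PF_def)
  show ?thesis unfolding Good_def
  proof (intro conjI allI impI)
    fix pa la assume "PF pa la \<and> la \<notin> smax G"
    then show "shift \<tau> [(u, b)] (pa, la) = return_pmf (st la)"
      using assms(1) PF unfolding Good_def shift_def by auto
  next
    fix pa la a s' assume "PF pa la \<and> la \<in> smax G \<and> (la, a) \<in> exits G C"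
    then show "reach_prob G (shift (shift \<sigma> [(u, b)]) (pa @ [(la, a)])) (shift (shift \<tau> [(u, b)]) (pa @ [(la, a)])) s' (T i)
        \<le> Wv G T (shift (shift \<sigma> [(u, b)]) (pa @ [(la, a)])) s' $ i + \<epsilon>"
    proof -
      have "reach_prob G (shift \<sigma> (((u,b)#pa) @ [(la, a)])) (shift \<tau> (((u,b)#pa) @ [(la, a)])) s' (T i)
        \<le> Wv G T (shift \<sigma> (((u,b)#pa) @ [(la, a)])) s' $ i + \<epsilon>"
        using assms(1) PF[of pa la] \<open>PF pa la \<and> la \<in> smax G \<and> (la, a) \<in> exits G C\<close> unfolding Good_def by blast
      then show ?thesis by simp
    qed
  qed
qed

lemma bound:
  assumes TC: "T i \<inter> C = {}" and e: "0 \<le> \<epsilon>"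
  shows "max_strategy G \<sigma> \<Longrightarrow> Good i \<epsilon> \<sigma> \<tau> \<Longrightarrow> s \<in> C \<Longrightarrow> Pm G \<sigma> \<tau> s (T i) m \<le> vsum (ev m \<sigma> s) $ i + \<epsilon>"
proof (induction m arbitrary: \<sigma> \<tau> s)
  case 0 then show ?case using TC e by (auto simp: Pm_0)
next
  case (Suc m)
  have sT: "s \<notin> T i" using TC Suc.prems(3) by auto
  show ?case
  proof (cases "s \<in> smax G")
    case False
    have tau: "\<tau> ([], s) = return_pmf (st s)"
      using Suc.prems(2,3) False unfolding Good_def PF_def by auto
    have "Pm G \<sigma> \<tau> s (T i) (Suc m) = (\<Sum>s'\<in>UNIV. pmf (delta G s (st s)) s' *
        Pm G (shift \<sigma> [(s, st s)]) (shift \<tau> [(s, st s)]) s' (T i) m)"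
      using sT False by (simp add: Pm_Suc tau sum_return)
    also have "\<dots> \<le> (\<Sum>s'\<in>UNIV. pmf (delta G s (st s)) s' * vsum (ev m (shift \<sigma> [(s, st s)]) s') $ i) + \<epsilon>"
    proof (rule sum_pmf_bound)
      fix s' assume "s' \<in> set_pmf (delta G s (st s))"
      then have "s' \<in> C" using st[OF Suc.prems(3)] by auto
      then show "Pm G (shift \<sigma> [(s, st s)]) (shift \<tau> [(s, st s)]) s' (T i) m \<le> vsum (ev m (shift \<sigma> [(s, st s)]) s') $ i + \<epsilon>"
        using Suc.IH[OF max_shift[OF Suc.prems(1)] Good_shift[OF Suc.prems(2,3)]] False by auto
    qed
    also have "\<dots> = vsum (ev (Suc m) \<sigma> s) $ i + \<epsilon>"
      using False by (simp add: vsum_ev_Suc)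
    finally show ?thesis .
  next
    case True
    have "Pm G \<sigma> \<tau> s (T i) (Suc m) = (\<Sum>a\<in>UNIV. pmf (\<sigma> ([], s)) a * (\<Sum>s'\<in>UNIV. pmf (delta G s a) s' *
        Pm G (shift \<sigma> [(s, a)]) (shift \<tau> [(s, a)]) s' (T i) m))"
      using sT True by (simp add: Pm_Suc)
    also have "\<dots> \<le> (\<Sum>a\<in>UNIV. pmf (\<sigma> ([], s)) a * (if (s,a) \<in> exits G C then pt \<sigma> s a
      else (\<Sum>s'\<in>UNIV. pmf (delta G s a) s' *\<^sub>R vsum (ev m (shift \<sigma> [(s,a)]) s'))) $ i) + \<epsilon>"
    proof (rule sum_pmf_bound)
      fix a assume a: "a \<in> set_pmf (\<sigma> ([], s))"
      then have aav: "a \<in> av G s" using Suc.prems(1) True by (auto simp: max_strategy_def is_strategy_def)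
      show "(\<Sum>s'\<in>UNIV. pmf (delta G s a) s' * Pm G (shift \<sigma> [(s, a)]) (shift \<tau> [(s, a)]) s' (T i) m)
         \<le> (if (s,a) \<in> exits G C then pt \<sigma> s a
      else (\<Sum>s'\<in>UNIV. pmf (delta G s a) s' *\<^sub>R vsum (ev m (shift \<sigma> [(s,a)]) s'))) $ i + \<epsilon>"
      proof (cases "(s,a) \<in> exits G C")
        case True
        have "(\<Sum>s'\<in>UNIV. pmf (delta G s a) s' * Pm G (shift \<sigma> [(s, a)]) (shift \<tau> [(s, a)]) s' (T i) m)
           \<le> (\<Sum>s'\<in>UNIV. pmf (delta G s a) s' * Wv G T (shift \<sigma> [(s, a)]) s' $ i) + \<epsilon>"
        proof (rule sum_pmf_bound)
          fix s'
          have "Pm G (shift \<sigma> [(s, a)]) (shift \<tau> [(s, a)]) s' (T i) m \<le> reach_prob G (shift \<sigma> [(s, a)]) (shift \<tau> [(s, a)]) s' (T i)"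
            by (rule Pm_le_reach)
          also have "\<dots> \<le> Wv G T (shift \<sigma> [(s, a)]) s' $ i + \<epsilon>"
            using Suc.prems(2,3) \<open>s \<in> smax G\<close> True unfolding Good_def PF_def
            by (metis (no_types, lifting) append_Nil empty_iff list.set(1))
          finally show "Pm G (shift \<sigma> [(s, a)]) (shift \<tau> [(s, a)]) s' (T i) m \<le> Wv G T (shift \<sigma> [(s, a)]) s' $ i + \<epsilon>" .
        qed
        then show ?thesis using True by (simp add: pt_def)
      next
        case False
        have sub: "set_pmf (delta G s a) \<subseteq> C" using False aav Suc.prems(3) by (auto simp: exits_def)
        have "(\<Sum>s'\<in>UNIV. pmf (delta G s a) s' * Pm G (shift \<sigma> [(s, a)]) (shift \<tau> [(s, a)]) s' (T i) m)
           \<le> (\<Sum>s'\<in>UNIV. pmf (delta G s a) s' * vsum (ev m (shift \<sigma> [(s,a)]) s') $ i) + \<epsilon>"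
        proof (rule sum_pmf_bound)
          fix s' assume "s' \<in> set_pmf (delta G s a)"
          then have "s' \<in> C" using sub by auto
          then show "Pm G (shift \<sigma> [(s, a)]) (shift \<tau> [(s, a)]) s' (T i) m \<le> vsum (ev m (shift \<sigma> [(s, a)]) s') $ i + \<epsilon>"
            using Suc.IH[OF max_shift[OF Suc.prems(1)] Good_shift[OF Suc.prems(2,3)]] False by auto
        qed
        then show ?thesis using False by simp
      qed
    qed
    also have "\<dots> = vsum (ev (Suc m) \<sigma> s) $ i + \<epsilon>"
      using True by (simp add: vsum_ev_Suc)
    finally show ?thesis .
  qed
qed

definition bad :: "'s \<times> 'a \<Rightarrow> bool" where
  "bad x \<longleftrightarrow> \<not> (fst x \<in> C \<and> (fst x \<in> smax G \<longrightarrow> x \<notin> exits G C))"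

fun fe :: "('s \<times> 'a) list \<Rightarrow> nat option" where
  "fe [] = None"
| "fe (x # xs) = (if bad x then Some 0 else map_option Suc (fe xs))"

lemma fe_None: "(\<forall>x\<in>set xs. \<not> bad x) \<Longrightarrow> fe xs = None"
  by (induction xs) auto

lemma fe_Some: "(\<forall>x\<in>set xs. \<not> bad x) \<Longrightarrow> bad y \<Longrightarrow> fe (xs @ y # zs) = Some (length xs)"
  by (induction xs) auto

lemma PF_nbad: "PF pa la \<Longrightarrow> \<forall>x\<in>set pa. \<not> bad x"
  unfolding PF_def bad_def by auto

definition tc :: "(('s, 'a) hist \<Rightarrow> 'a pmf) \<Rightarrow> 'n \<Rightarrow> real \<Rightarrow> ('s \<times> 'a) list \<Rightarrow> 's \<Rightarrow> (('s, 'a) hist \<Rightarrow> 'a pmf)" where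
  "tc \<sigma> i \<epsilon> p s' = (SOME \<tau>. min_strategy G \<tau> \<and> reach_prob G (shift \<sigma> p) \<tau> s' (T i) \<le> Wv G T (shift \<sigma> p) s' $ i + \<epsilon>)"

lemma tc_prop: "0 < \<epsilon> \<Longrightarrow> min_strategy G (tc \<sigma> i \<epsilon> p s') \<and>
    reach_prob G (shift \<sigma> p) (tc \<sigma> i \<epsilon> p s') s' (T i) \<le> Wv G T (shift \<sigma> p) s' $ i + \<epsilon>"
proof -
  assume e: "0 < \<epsilon>"
  have "\<exists>\<tau>. min_strategy G \<tau> \<and> reach_prob G (shift \<sigma> p) \<tau> s' (T i) \<le> Wv G T (shift \<sigma> p) s' $ i + \<epsilon>"
    by (rule W_eps[OF wf e])
  then show ?thesis unfolding tc_def by (rule someI_ex)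
qed

definition tstar :: "(('s, 'a) hist \<Rightarrow> 'a pmf) \<Rightarrow> 'n \<Rightarrow> real \<Rightarrow> (('s, 'a) hist \<Rightarrow> 'a pmf)" where
  "tstar \<sigma> i \<epsilon> h = (case fe (fst h) of
     Some j \<Rightarrow> tc \<sigma> i \<epsilon> (take (Suc j) (fst h)) (first (drop (Suc j) (fst h), snd h)) (drop (Suc j) (fst h), snd h)
   | None \<Rightarrow> if snd h \<notin> smax G \<and> snd h \<in> C then return_pmf (st (snd h)) else dflt G h)"

lemma tstar_min: assumes "0 < \<epsilon>" shows "min_strategy G (tstar \<sigma> i \<epsilon>)"
  unfolding min_strategy_def is_strategy_def
proof (intro allI impI)
  fix h :: "('s,'a) hist" assume h: "snd h \<in> - smax G"
  show "set_pmf (tstar \<sigma> i \<epsilon> h) \<subseteq> av G (snd h)"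
  proof (cases "fe (fst h)")
    case None then show ?thesis
      using h st dflt_strat[OF wf, of "- smax G"] by (cases h) (auto simp: tstar_def is_strategy_def)
  next
    case (Some j)
    have "min_strategy G (tc \<sigma> i \<epsilon> (take (Suc j) (fst h)) (first (drop (Suc j) (fst h), snd h)))"
      using tc_prop[OF assms] by blast
    then show ?thesis using Some h by (auto simp: tstar_def min_strategy_def is_strategy_def)
  qed
qed

lemma tstar_Good: assumes "0 < \<epsilon>" shows "Good i \<epsilon> \<sigma> (tstar \<sigma> i \<epsilon>)"
  unfolding Good_def
proof (intro conjI allI impI)
  fix pa la assume "PF pa la \<and> la \<notin> smax G"
  then show "tstar \<sigma> i \<epsilon> (pa, la) = return_pmf (st la)"
    using fe_None[OF PF_nbad] by (auto simp: tstar_def PF_def)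
next
  fix pa la a s' assume H: "PF pa la \<and> la \<in> smax G \<and> (la, a) \<in> exits G C"
  define p where "p = pa @ [(la,a)]"
  have "bad (la,a)" using H by (auto simp: bad_def)
  then have fe: "fe (p @ rest) = Some (length pa)" for rest
    using fe_Some[OF PF_nbad, of pa la "(la,a)" rest] H by (simp add: p_def)
  have eq: "shift (tstar \<sigma> i \<epsilon>) p h = tc \<sigma> i \<epsilon> p (first h) h" for h
    unfolding shift_def tstar_def using fe[of "fst h"] by (simp add: p_def)
  have "reach_prob G (shift \<sigma> p) (shift (tstar \<sigma> i \<epsilon>) p) s' (T i) = reach_prob G (shift \<sigma> p) (tc \<sigma> i \<epsilon> p s') s' (T i)"
    by (rule reach_local) (simp add: eq)
  also have "\<dots> \<le> Wv G T (shift \<sigma> p) s' $ i + \<epsilon>" using tc_prop[OF assms] by blast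
  finally show "reach_prob G (shift \<sigma> (pa @ [(la, a)])) (shift (tstar \<sigma> i \<epsilon>) (pa @ [(la, a)])) s' (T i)
       \<le> Wv G T (shift \<sigma> (pa @ [(la, a)])) s' $ i + \<epsilon>" by (simp add: p_def)
qed

lemma comb_cube: assumes "\<And>s'. x s' \<in> achievable G T s'"
  shows "0 \<le> (\<Sum>s'\<in>UNIV. pmf (delta G s a) s' *\<^sub>R x s') $ j \<and> (\<Sum>s'\<in>UNIV. pmf (delta G s a) s' *\<^sub>R x s') $ j \<le> 1"
proof -
  have c: "0 \<le> x s' $ j \<and> x s' $ j \<le> 1" for s' using ach_cube[OF wf assms] by blast
  have "(\<Sum>s'\<in>UNIV. pmf (delta G s a) s' * x s' $ j) \<le> (\<Sum>s'\<in>UNIV. pmf (delta G s a) s')"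
    using c by (intro sum_mono mult_right_le_one_le) auto
  then show ?thesis using c by (auto simp: sum_pmf_UNIV intro!: sum_nonneg)
qed

lemma PD_cube: "g \<in> PD \<Longrightarrow> 0 \<le> g $ j \<and> g $ j \<le> 1"
  unfolding PD_def using comb_cube by blast

lemma in_fsa: assumes "\<And>s'. x s' \<in> achievable G T s'" "\<And>s'. x s' \<in> U s'"
  shows "(\<Sum>s'\<in>UNIV. pmf (delta G s a) s' *\<^sub>R x s') \<in> fsa G T U s a"
proof -
  let ?p = "(\<Sum>s'\<in>UNIV. pmf (delta G s a) s' *\<^sub>R x s')"
  have "0 \<in> dwc {ind_T T s}" by (auto simp: dwc_def ind_T_def less_eq_vec_def)
  moreover have "?p \<in> succ_sum G U s a" unfolding succ_sum_def using assms(2) by blast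
  ultimately have "0 + ?p \<in> mink_plus (dwc {ind_T T s}) (succ_sum G U s a)" unfolding mink_plus_def by blast
  moreover have "?p \<in> one_box" unfolding one_box_def dwc_def using comb_cube[OF assms(1)]
    by (auto simp: less_eq_vec_def)
  ultimately show ?thesis unfolding fsa_def by simp
qed

lemma key:
  assumes U: "\<And>s. achievable G T s \<subseteq> U s" and s0: "s0 \<in> C" and v: "v \<in> achievable G T s0"
  shows "v \<in> best_exit G T U C"
proof -
  obtain \<sigma> where \<sigma>: "max_strategy G \<sigma>" "\<And>\<tau> j. min_strategy G \<tau> \<Longrightarrow> v $ j \<le> reach_prob G \<sigma> \<tau> s0 (T j)"
    and vnn: "\<And>j. 0 \<le> v $ j"
    using v unfolding achievable_def by blast
  have v1: "v $ j \<le> 1" for j using ach_cube[OF wf v] by blast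
  define Sm where "Sm m = vsum (ev m \<sigma> s0)" for m
  have el: "(w,g) \<in># ev m \<sigma> s0 \<Longrightarrow> 0 \<le> w \<and> g \<in> PD" for w g m
    using ev_w ev_el[OF \<sigma>(1)] by blast
  have inc: "incseq (\<lambda>m. Sm m $ j)" for j
  proof (rule incseq_SucI)
    fix m show "Sm m $ j \<le> Sm (Suc m) $ j"
      unfolding Sm_def vsum_comp
      by (rule sum_mset_mono_sub[OF ev_mono]) (use el PD_cube in force)
  qed
  have Sm1: "Sm m $ j \<le> 1" for m j
  proof -
    have "Sm m $ j \<le> msum (ev m \<sigma> s0)" unfolding Sm_def
      by (rule vsum_le_msum) (use el PD_cube in blast)
    then show ?thesis using ev_mass[of m \<sigma> s0] by linarith
  qed
  have bdd: "bdd_above (range (\<lambda>m. Sm m $ j))" for j using Sm1 by (intro bdd_aboveI[of _ 1]) auto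
  define y where "y = (\<chi> j. SUP m. Sm m $ j)"
  have Sm_le: "Sm m $ j \<le> y $ j" for m j unfolding y_def using bdd by (auto intro: cSUP_upper)
  have lim: "Sm \<longlonglongrightarrow> y"
    by (rule vec_tendstoI) (unfold y_def, simp, rule LIMSEQ_incseq_SUP[OF bdd inc])
  have y0: "0 \<le> y $ j" for j using Sm_le[of 0 j] by (simp add: Sm_def)
  define K where "K = convex hull (PD \<union> {0})"
  have yK: "y \<in> K"
    unfolding K_def
    by (rule bary[where E="\<lambda>m. ev m \<sigma> s0"]) (use el ev_mono ev_mass lim[unfolded Sm_def] in \<open>auto intro: hull_inc\<close>)
  have vy: "v $ i \<le> y $ i" if TC: "T i \<inter> C = {}" for i
  proof (rule field_le_epsilon)
    fix \<epsilon> :: real assume e: "0 < \<epsilon>"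
    have "v $ i \<le> reach_prob G \<sigma> (tstar \<sigma> i \<epsilon>) s0 (T i)" by (rule \<sigma>(2)[OF tstar_min[OF e]])
    also have "\<dots> \<le> y $ i + \<epsilon>"
    proof (rule reach_leI)
      fix m
      have "Pm G \<sigma> (tstar \<sigma> i \<epsilon>) s0 (T i) m \<le> Sm m $ i + \<epsilon>"
        unfolding Sm_def using bound[OF TC _ \<sigma>(1) tstar_Good[OF e] s0] e by simp
      then show "Pm G \<sigma> (tstar \<sigma> i \<epsilon>) s0 (T i) m \<le> y $ i + \<epsilon>" using Sm_le[of m i] by linarith
    qed
    finally show "v $ i \<le> y $ i + \<epsilon>" .
  qed
  define d where "d j = (if y $ j = 0 then 0 else min 1 (v $ j / y $ j))" for j
  define Dl :: "real ^ 'n \<Rightarrow> real ^ 'n" where "Dl z = (\<chi> j. d j * z $ j)" for z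
  have d01: "0 \<le> d j \<and> d j \<le> 1" for j using vnn[of j] y0[of j] by (auto simp: d_def)
  have Dl_lin: "Dl (u *\<^sub>R z1 + w *\<^sub>R z2) = u *\<^sub>R Dl z1 + w *\<^sub>R Dl z2" for u w z1 z2
    by (simp add: Dl_def vec_eq_iff algebra_simps)
  have Dl_sum: "Dl (\<Sum>s'\<in>UNIV. c s' *\<^sub>R x s') = (\<Sum>s'\<in>UNIV. c s' *\<^sub>R Dl (x s'))" for c x
    by (simp add: Dl_def vec_eq_iff sum_distrib_left algebra_simps)
  have KK: "K \<subseteq> {z. Dl z \<in> K}"
    unfolding K_def
  proof (rule hull_minimal)
    show "convex {z. Dl z \<in> convex hull (PD \<union> {0})}"
      by (rule convexI) (auto simp: Dl_lin intro!: convexD[OF convex_convex_hull])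
    show "PD \<union> {0} \<subseteq> {z. Dl z \<in> convex hull (PD \<union> {0})}"
    proof
      fix z assume "z \<in> PD \<union> {0}"
      then consider "z = 0" | s a x where "z = (\<Sum>s'\<in>UNIV. pmf (delta G s a) s' *\<^sub>R x s')"
        "(s,a) \<in> exits G C" "s \<in> smax G" "\<forall>s'. x s' \<in> achievable G T s'" unfolding PD_def by blast
      then show "z \<in> {z. Dl z \<in> convex hull (PD \<union> {0})}"
      proof cases
        case 1 then show ?thesis by (auto simp: Dl_def vec_eq_iff intro!: hull_inc)
      next
        case 2
        have "\<forall>s'. Dl (x s') \<in> achievable G T s'"
        proof
          fix s' show "Dl (x s') \<in> achievable G T s'"
          proof (rule ach_down)
            show "x s' \<in> achievable G T s'" using 2 by blast
            fix j
            have "0 \<le> x s' $ j" using ach_cube[OF wf, of "x s'"] 2 by blast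
            then show "0 \<le> Dl (x s') $ j \<and> Dl (x s') $ j \<le> x s' $ j"
              using d01[of j] by (auto simp: Dl_def mult_left_le_one_le)
          qed
        qed
        then have "Dl z \<in> PD" unfolding PD_def 2(1) Dl_sum
          by (intro CollectI exI[of _ s] exI[of _ a] exI[of _ "\<lambda>s'. Dl (x s')"]) (use 2 in auto)
        then show ?thesis by (auto intro: hull_inc)
      qed
    qed
  qed
  define b where "b = Dl y"
  have bK: "b \<in> K" using KK yK by (auto simp: b_def)
  have bj: "b $ j = (if y $ j = 0 then 0 else min (y $ j) (v $ j))" for j
    using y0[of j] by (auto simp: b_def Dl_def d_def min_def field_simps)
  define E where "E = {(s, a) \<in> exits G C. s \<in> smax G}"
  define X where "X = (if E = {} then {0} else (\<Union>(s, a) \<in> E. fsa G T U s a))"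
  have PDX: "PD \<union> {0} \<subseteq> X"
  proof (cases "E = {}")
    case True
    then have "PD = {}" unfolding PD_def E_def by auto
    then show ?thesis using True by (simp add: X_def)
  next
    case False
    then obtain s a where sa: "(s,a) \<in> E" by auto
    have "0 \<in> fsa G T U s a"
      using in_fsa[where x="\<lambda>_. 0" and s=s and a=a and U=U] zero_ach[OF wf] U by auto
    moreover have "PD \<subseteq> X"
    proof
      fix z assume "z \<in> PD"
      then obtain s a x where z: "z = (\<Sum>s'\<in>UNIV. pmf (delta G s a) s' *\<^sub>R x s')"
        "(s,a) \<in> exits G C" "s \<in> smax G" "\<forall>s'. x s' \<in> achievable G T s'" unfolding PD_def by blast
      then have "z \<in> fsa G T U s a" using in_fsa[where x=x and s=s and a=a and U=U] U by blast
      moreover have "(s,a) \<in> E" using z unfolding E_def by blast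
      ultimately show "z \<in> X" using False unfolding X_def by auto
    qed
    ultimately show ?thesis using sa False by (auto simp: X_def)
  qed
  have bX: "b \<in> convex hull X" using bK PDX hull_mono unfolding K_def by blast
  define ind where "ind = (\<Sum>s\<in>C. ind_T T s)"
  have "v - b \<in> dwc {ind}"
    unfolding dwc_def
  proof (intro CollectI conjI allI bexI)
    fix j show "0 \<le> (v - b) $ j" using bj[of j] vnn[of j] by auto
  next
    show "v - b \<le> ind" unfolding less_eq_vec_def
    proof
      fix j
      show "(v - b) $ j \<le> ind $ j"
      proof (cases "T j \<inter> C = {}")
        case True
        have "b $ j = v $ j" using vy[OF True] bj[of j] vnn[of j] y0[of j] by auto
        moreover have "0 \<le> ind $ j" by (auto simp: ind_def ind_T_def intro!: sum_nonneg)
        ultimately show ?thesis by simp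
      next
        case False
        then obtain s where s: "s \<in> T j" "s \<in> C" by auto
        have "1 \<le> ind $ j"
          unfolding ind_def sum_component
          using member_le_sum[of s C "\<lambda>s. ind_T T s $ j"] s by (auto simp: ind_T_def)
        moreover have "0 \<le> b $ j" using bj[of j] vnn[of j] y0[of j] by auto
        ultimately show ?thesis using v1[of j] by simp
      qed
    qed
  qed simp
  then have "(v - b) + b \<in> mink_plus (dwc {ind}) (convex hull X)" using bX unfolding mink_plus_def by blast
  moreover have "v \<in> one_box" unfolding one_box_def dwc_def using vnn v1 by (auto simp: less_eq_vec_def)
  ultimately show ?thesis unfolding best_exit_def Let_def E_def[symmetric] X_def[symmetric] ind_def[symmetric] by simp
qed

end



lemma key_apply:
  fixes G :: "('s::finite, 'a::finite) sgame" and T :: "'n::finite \<Rightarrow> 's set"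
  assumes wf: "wf_game G" and U: "\<And>s. achievable G T s \<subseteq> U s"
    and stay: "\<And>u. u \<in> C' \<Longrightarrow> \<exists>a\<in>av G u. set_pmf (delta G u a) \<subseteq> C'"
    and s: "s \<in> C'" and v: "v \<in> achievable G T s"
  shows "v \<in> best_exit G T U C'"
proof -
  define st where "st u = (SOME a. a \<in> av G u \<and> set_pmf (delta G u a) \<subseteq> C')" for u
  have "kc G C' st"
  proof
    show "wf_game G" by (rule wf)
    fix u assume "u \<in> C'"
    then show "st u \<in> av G u \<and> set_pmf (delta G u (st u)) \<subseteq> C'"
      unfolding st_def using stay by (metis (no_types, lifting) someI_ex)
  qed
  then show ?thesis using kc.key[of G C' st T U s v] U s v by blast
qed

lemma sec_stay:
  assumes "C' \<in> find_SECs G T C L R" "u \<in> C'"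
  shows "\<exists>a\<in>av G u. set_pmf (delta G u a) \<subseteq> C'"
proof -
  define d where "d = (SOME d. d \<in> R)"
  define Av' where "Av' = (\<lambda>s. if s \<in> C \<inter> - smax G then argmin_acts G T L s d else av G s)"
  have "is_EC G C Av' C'" using assms(1) unfolding find_SECs_def Let_def MECs_def d_def Av'_def by auto
  then obtain B where B: "B \<noteq> {}" "B \<subseteq> {(s, a). s \<in> C' \<and> a \<in> Av' s}"
    "\<forall>(s, a) \<in> B. set_pmf (delta G s a) \<subseteq> C'"
    "\<forall>s\<in>C'. \<forall>t\<in>C'. (s, t) \<in> {(u, v). \<exists>a. (u, a) \<in> B \<and> v \<in> set_pmf (delta G u a)}\<^sup>*"
    unfolding is_EC_def by blast
  have Av'av: "Av' s \<subseteq> av G s" for s unfolding Av'_def argmin_acts_def by auto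
  obtain u0 b0 where ub0: "(u0,b0) \<in> B" using B(1) by auto
  then have "u0 \<in> C'" using B(2) by auto
  have "\<exists>a. (u,a) \<in> B"
  proof (cases "u = u0")
    case True then show ?thesis using ub0 by auto
  next
    case False
    have "(u, u0) \<in> {(u, v). \<exists>a. (u, a) \<in> B \<and> v \<in> set_pmf (delta G u a)}\<^sup>*"
      using B(4) assms(2) \<open>u0 \<in> C'\<close> by blast
    then show ?thesis using False by (cases rule: converse_rtranclE) auto
  qed
  then obtain a where "(u,a) \<in> B" by auto
  then show ?thesis using B(2,3) Av'av by blast
qed

theorem lemma4p4:
  fixes G :: "('s::finite, 'a::finite) sgame"
    and T :: "'n::finite \<Rightarrow> 's set"
    and L U :: "'s \<Rightarrow> (real ^ 'n) set"
  assumes "wf_game G"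
    and "\<And>s. L s \<subseteq> unit_cube" and "\<And>s. U s \<subseteq> unit_cube"
    and "\<And>s. L s \<subseteq> achievable G T s"
    and "\<And>s. achievable G T s \<subseteq> U s"
  shows "\<forall>s. deflate_SECs G T L U s \<subseteq> U s \<and> achievable G T s \<subseteq> deflate_SECs G T L U s"
proof (intro allI conjI)
  fix s
  have z: "0 \<in> U s" using zero_ach[OF assms(1)] assms(5) by blast
  show "deflate_SECs G T L U s \<subseteq> U s"
    unfolding deflate_SECs_def using z by auto
  show "achievable G T s \<subseteq> deflate_SECs G T L U s"
  proof
    fix v assume v: "v \<in> achievable G T s"
    then have vU: "v \<in> U s" using assms(5) by blast
    show "v \<in> deflate_SECs G T L U s"
    proof (cases "\<exists>C \<in> MECs G UNIV (av G). s \<in> C")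
      case False then show ?thesis using vU by (simp add: deflate_SECs_def)
    next
      case True
      then obtain C where C: "C \<in> MECs G UNIV (av G)" "s \<in> C" by blast
      show ?thesis
      proof (cases "v = 0")
        case True then show ?thesis using z by (simp add: deflate_SECs_def)
      next
        case False
        have vcube: "v \<in> unit_cube" using ach_cube[OF assms(1) v] by (auto simp: unit_cube_def)
        define d where "d = dir v"
        have dD: "d \<in> Dirs" unfolding Dirs_def d_def using vcube False by blast
        define R where "R = {d' \<in> Dirs. \<forall>u \<in> C \<inter> - smax G. d' \<in> region_B G T L u (argmin_acts G T L u d)}"
        have dR: "d \<in> R" unfolding R_def region_B_def using dD by auto
        have RG: "R \<in> get_regions G T C L"
          unfolding get_regions_def using dR by (auto simp: R_def)
        have vR: "v \<in> region_pts R" unfolding region_pts_def using vcube dR d_def by auto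
        have "v \<in> (if \<exists>C' \<in> find_SECs G T C L R. s \<in> C'
                   then (\<Union>C' \<in> {C' \<in> find_SECs G T C L R. s \<in> C'}.
                           U s \<inter> best_exit G T U C' \<inter> region_pts R)
                   else U s \<inter> region_pts R)"
        proof (cases "\<exists>C' \<in> find_SECs G T C L R. s \<in> C'")
          case True
          then obtain C' where C': "C' \<in> find_SECs G T C L R" "s \<in> C'" by blast
          have "v \<in> best_exit G T U C'"
            by (rule key_apply[OF assms(1) assms(5) sec_stay[OF C'(1)] C'(2) v])
          then show ?thesis using True C' vU vR by auto
        next
          case False then show ?thesis using vU vR by simp
        qed
        then have "v \<in> (\<Union>C \<in> {C \<in> MECs G UNIV (av G). s \<in> C}.
                \<Union>R \<in> get_regions G T C L.
                  (if \<exists>C' \<in> find_SECs G T C L R. s \<in> C'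
                   then (\<Union>C' \<in> {C' \<in> find_SECs G T C L R. s \<in> C'}.
                           U s \<inter> best_exit G T U C' \<inter> region_pts R)
                   else U s \<inter> region_pts R))"
          using C RG by (intro UN_I[of C] UN_I[of R]) auto
        then show ?thesis unfolding deflate_SECs_def using True by (simp only: if_P) blast
      qed
    qed
  qed
qed


end
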